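(* In the FIND setting of the context, fix a leaf cluster $\mathcal C_r$, a consistent ordering of $\mathcal T_r^+$, and perform the elimination $\mathbf A_{g+}=\mathbf L_g^{-1}\mathbf A_g$ while updating $\boldsymbol\Sigma_{g+}=\mathbf L_g^{-1}\boldsymbol\Sigma_g\mathbf L_g^{-\dagger}$ (starting from $\boldsymbol\Sigma_{g_1}=\boldsymbol\Sigma$). Then for every node $g$ of $\mathcal T_r^+$: (I) for every node $h$ of $\mathcal T_r^+$ with $\mathcal S_h\ge\mathcal S_g$ (i.e. $h=g$ or $h$ after $g$), $\boldsymbol\Sigma_g(\mathcal S_h,\mathcal S_{>h}\setminus\mathcal B_h)=0$ and $\boldsymbol\Sigma_g(\mathcal S_{>h}\setminus\mathcal B_h,\mathcal S_h)=0$; (II) (a) $\boldsymbol\Sigma_{g+}(\mathcal S_{\le g},\mathcal S_{\le g})=\boldsymbol\Sigma_g(\mathcal S_{\le g},\mathcal S_{\le g})$; (b) $\boldsymbol\Sigma_{g+}(\mathcal M,\mathcal S_{>g}\setminus\mathcal B_g)=\boldsymbol\Sigma_g(\mathcal M,\mathcal S_{>g}\setminus\mathcal B_g)$; (c) $\boldsymbol\Sigma_{g+}(\mathcal S_{>g}\setminus\mathcal B_g,\mathcal M)=\boldsymbol\Sigma_g(\mathcal S_{>g}\setminus\mathcal B_g,\mathcal M)$; (III) $\boldsymbol\Sigma_{g+}(\mathcal B_g,\mathcal B_g)=\boldsymbol\Sigma_g(\mathcal B_g,\mathcal B_g)-\mathcal L_g\boldsymbol\Sigma_g(\mathcal S_g,\mathcal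 B_g)-\boldsymbol\Sigma_g(\mathcal B_g,\mathcal S_g)\mathcal L_g^\dagger+\mathcal L_g\boldsymbol\Sigma_g(\mathcal S_g,\mathcal S_g)\mathcal L_g^\dagger$.
   Context: Setting (FIND). $\mathcal M$ is a finite set of mesh nodes; $\mathbf A$ is an invertible complex matrix indexed by $\mathcal M\times\mathcal M$, structurally symmetric ($A_{ij}\neq0\iff A_{ji}\neq0$); distinct nodes $i,j$ are connected if $A_{ij}\neq 0$. $\boldsymbol\Sigma$ is a complex matrix indexed by $\mathcal M\times\mathcal M$ with $\Sigma_{ij}=0$ whenever $i\neq j$ and $i,j$ are not connected. $\dagger$ denotes conjugate transpose and $\mathbf X^{-\dagger}=(\mathbf X^{-1})^\dagger$. For $X,Y\subseteq\mathcal M$, $\mathbf X(X,Y)$ is the submatrix with rows in $X$ and columns in $Y$. For a cluster $\mathcal C\subseteq\mathcal M$: boundary set $\mathcal B_{\mathcal C}=\{i\in\mathcal C: A_{ij}\neq 0\text{ for some } j\notin\mathcal C\}$, inner set $\mathcal I_{\mathcal C}=\mathcal C\setminus\mathcal B_{\mathcal C}$; for $\mathcal C_g$ write $\mathcal B_g,\mathcal I_g$. Cluster tree: $\mathcal T$ is a rooted binary tree of clusters with root $\mathcal M$, each non-leaf cluster the disjoint union of its two children. For a leaf $\mathcal C_r$ with path $r=a_0,\dots,a_d$ (root) and $b_k$ the sibling of $a_k$, the augmented tree $\mathcal T_r^+$ has root $\mathcal C_{-r}=\mathcal M\setminus\mathcal C_r$; for $0\le k\le d-2$, $\mathcal C_{-a_k}=\mathcal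 M\setminus\mathcal C_{a_k}$ has children $\mathcal C_{b_k}$ and $\mathcal C_{-a_{k+1}}$, with $\mathcal C_{-a_{d-1}}$ identified with $\mathcal C_{b_{d-1}}$ (equal sets); each basic cluster $\mathcal C_{b_k}$ carries its subtree from $\mathcal T$. Private inner nodes: $\mathcal S_g=\mathcal I_g$ for a leaf $g$ of $\mathcal T_r^+$; $\mathcal S_g=\mathcal I_g\setminus(\mathcal I_i\cup\mathcal I_j)$ if $g$ has children $i,j$. The sets $\mathcal S_g$ ($g\in\mathcal T_r^+$), $\mathcal B_{-r}$, $\mathcal C_r$ partition $\mathcal M$. Consistent ordering: a total order $g_1,\dots,g_m$ of the nodes of $\mathcal T_r^+$ with every node after all its descendants; $\mathcal S_h<\mathcal S_g$ means $h$ precedes $g$. $\mathcal S_{<g}$, $\mathcal S_{\le g}$: union of $\mathcal S_h$ over $h$ preceding $g$ (resp. preceding or equal); $\mathcal S_{>g}$: union of $\mathcal S_h$ over $h$ after $g$, together with $\mathcal B_{-r}\cup\mathcal C_r$. Elimination: $\mathbf A_{g_1}=\mathbf A$, $\boldsymbol\Sigma_{g_1}=\boldsymbol\Sigma$. For each $g$ (with $\mathbf A_g(\mathcal S_g,\mathcal S_g)$ assumed invertible), $\mathcal L_g=\mathbf A_g(\mathcal B_g,\mathcal S_g)\mathbf A_g(\mathcal S_g,\mathcal S_g)^{-1}$, $\mathbf L_g$ is the identity on $\mathcal M$ except $\mathbf L_g(\mathcal B_g,\mathcal S_g)=\mathcal L_g$ (this is the block Gaussian elimination factor of the columns $\mathcal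 S_g$), $\mathbf A_{g+}=\mathbf L_g^{-1}\mathbf A_g$, $\boldsymbol\Sigma_{g+}=\mathbf L_g^{-1}\boldsymbol\Sigma_g\mathbf L_g^{-\dagger}$, and $\mathbf A_{g_{t+1}}=\mathbf A_{g_t+}$, $\boldsymbol\Sigma_{g_{t+1}}=\boldsymbol\Sigma_{g_t+}$. *)

theory Defs
  imports Complex_Main "HOL-Library.Sublist"
begin

text \<open>A matrix indexed by a finite index set K is a function 'a => 'a => complex;
only its entries on K x K are relevant. Products are taken over K.\<close>

type_synonym 'a cmat = "'a \<Rightarrow> 'a \<Rightarrow> complex"

definition mmul :: "'a set \<Rightarrow> 'a cmat \<Rightarrow> 'a cmat \<Rightarrow> 'a cmat" where
  "mmul K X Y = (\<lambda>i j. \<Sum>k\<in>K. X i k * Y k j)"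

definition idm :: "'a set \<Rightarrow> 'a cmat" where
  "idm K = (\<lambda>i j. if i = j \<and> i \<in> K then 1 else 0)"

definition is_inv_on :: "'a set \<Rightarrow> 'a cmat \<Rightarrow> 'a cmat \<Rightarrow> bool" where
  "is_inv_on K X Y \<longleftrightarrow>
     (\<forall>i\<in>K. \<forall>j\<in>K. (\<Sum>k\<in>K. X i k * Y k j) = idm K i j \<and> (\<Sum>k\<in>K. Y i k * X k j) = idm K i j)
     \<and> (\<forall>i j. i \<notin> K \<or> j \<notin> K \<longrightarrow> Y i j = 0)"

definition invertible_on :: "'a set \<Rightarrow> 'a cmat \<Rightarrow> bool" where
  "invertible_on K X \<longleftrightarrow> (\<exists>Y. is_inv_on K X Y)"

definition minv :: "'a set \<Rightarrow> 'a cmat \<Rightarrow> 'a cmat" where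
  "minv K X = (THE Y. is_inv_on K X Y)"

definition dag :: "'a cmat \<Rightarrow> 'a cmat" where
  "dag X = (\<lambda>i j. cnj (X j i))"

definition bnd :: "'a set \<Rightarrow> 'a cmat \<Rightarrow> 'a set \<Rightarrow> 'a set" where
  "bnd M A X = {i \<in> X. \<exists>j\<in>M. j \<notin> X \<and> A i j \<noteq> 0}"

definition inner :: "'a set \<Rightarrow> 'a cmat \<Rightarrow> 'a set \<Rightarrow> 'a set" where
  "inner M A X = X - bnd M A X"

text \<open>The cluster tree T is given by its set P of node positions (paths from the root,
False = left child, True = right child) and the cluster map Cl.\<close>

definition cluster_tree :: "'a set \<Rightarrow> bool list set \<Rightarrow> (bool list \<Rightarrow> 'a set) \<Rightarrow> bool" where
  "cluster_tree M P Cl \<longleftrightarrow>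
     finite P \<and> [] \<in> P \<and> Cl [] = M
     \<and> (\<forall>p b. p @ [b] \<in> P \<longrightarrow> p \<in> P)
     \<and> (\<forall>p. p @ [False] \<in> P \<longleftrightarrow> p @ [True] \<in> P)
     \<and> (\<forall>p. p @ [False] \<in> P \<longrightarrow>
            Cl p = Cl (p @ [False]) \<union> Cl (p @ [True]) \<and> Cl (p @ [False]) \<inter> Cl (p @ [True]) = {})"

definition is_leaf :: "bool list set \<Rightarrow> bool list \<Rightarrow> bool" where
  "is_leaf P r \<longleftrightarrow> r \<in> P \<and> r @ [False] \<notin> P"

text \<open>Path r = a_0, ..., a_d = root with d = length r; a_k = take (d - k) r;
b_k = sibling of a_k (k < d).\<close>
definition anc :: "bool list \<Rightarrow> nat \<Rightarrow> bool list" where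
  "anc r k = take (length r - k) r"

definition sib :: "bool list \<Rightarrow> nat \<Rightarrow> bool list" where
  "sib r k = take (length r - Suc k) r @ [\<not> r ! (length r - Suc k)]"

text \<open>Nodes of the augmented tree: Cmp a stands for the complement cluster -a
(for a = a_k, 0 <= k <= d-2), Bas q for a node q of T lying in the subtree of
some basic cluster b_k. The node -a_(d-1) is identified with Bas b_(d-1).\<close>
datatype anode = Bas "bool list" | Cmp "bool list"

definition aug_nodes :: "bool list set \<Rightarrow> bool list \<Rightarrow> anode set" where
  "aug_nodes P r =
     {Cmp (anc r k) | k. k + 2 \<le> length r}
     \<union> {Bas q | q k. k < length r \<and> q \<in> P \<and> prefix (sib r k) q}"

definition aug_children :: "bool list set \<Rightarrow> bool list \<Rightarrow> anode \<Rightarrow> (anode \<times> anode) option" where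
  "aug_children P r g = (case g of
      Cmp a \<Rightarrow> (let k = length r - length a in
                  Some (Bas (sib r k),
                        if k + 3 \<le> length r then Cmp (anc r (Suc k)) else Bas (sib r (Suc k))))
    | Bas q \<Rightarrow> (if q @ [False] \<in> P then Some (Bas (q @ [False]), Bas (q @ [True])) else None))"

definition aug_cluster :: "'a set \<Rightarrow> (bool list \<Rightarrow> 'a set) \<Rightarrow> anode \<Rightarrow> 'a set" where
  "aug_cluster M Cl g = (case g of Cmp a \<Rightarrow> M - Cl a | Bas q \<Rightarrow> Cl q)"

definition aug_child_rel :: "bool list set \<Rightarrow> bool list \<Rightarrow> (anode \<times> anode) set" where
  "aug_child_rel P r = {(c, p). p \<in> aug_nodes P r \<and>
       (\<exists>c1 c2. aug_children P r p = Some (c1, c2) \<and> (c = c1 \<or> c = c2))}"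

definition consistent_ordering :: "bool list set \<Rightarrow> bool list \<Rightarrow> anode list \<Rightarrow> bool" where
  "consistent_ordering P r ord \<longleftrightarrow>
     distinct ord \<and> set ord = aug_nodes P r
     \<and> (\<forall>s < length ord. \<forall>t < length ord. (ord ! s, ord ! t) \<in> (aug_child_rel P r)\<^sup>+ \<longrightarrow> s < t)"

definition Bnd :: "'a set \<Rightarrow> 'a cmat \<Rightarrow> (bool list \<Rightarrow> 'a set) \<Rightarrow> anode \<Rightarrow> 'a set" where
  "Bnd M A Cl g = bnd M A (aug_cluster M Cl g)"

definition Inn :: "'a set \<Rightarrow> 'a cmat \<Rightarrow> (bool list \<Rightarrow> 'a set) \<Rightarrow> anode \<Rightarrow> 'a set" where
  "Inn M A Cl g = inner M A (aug_cluster M Cl g)"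

definition priv :: "'a set \<Rightarrow> 'a cmat \<Rightarrow> bool list set \<Rightarrow> (bool list \<Rightarrow> 'a set) \<Rightarrow> bool list \<Rightarrow> anode \<Rightarrow> 'a set" where
  "priv M A P Cl r g = (case aug_children P r g of
      None \<Rightarrow> Inn M A Cl g
    | Some (c1, c2) \<Rightarrow> Inn M A Cl g - (Inn M A Cl c1 \<union> Inn M A Cl c2))"

text \<open>S_{<=g} and S_{>g} for g = ord ! t (S_{>g} includes B_{-r} and C_r).\<close>
definition S_le :: "'a set \<Rightarrow> 'a cmat \<Rightarrow> bool list set \<Rightarrow> (bool list \<Rightarrow> 'a set) \<Rightarrow> bool list \<Rightarrow> anode list \<Rightarrow> nat \<Rightarrow> 'a set" where
  "S_le M A P Cl r ord t = (\<Union>s\<in>{s. s \<le> t \<and> s < length ord}. priv M A P Cl r (ord ! s))"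

definition S_gt :: "'a set \<Rightarrow> 'a cmat \<Rightarrow> bool list set \<Rightarrow> (bool list \<Rightarrow> 'a set) \<Rightarrow> bool list \<Rightarrow> anode list \<Rightarrow> nat \<Rightarrow> 'a set" where
  "S_gt M A P Cl r ord t = (\<Union>s\<in>{s. t < s \<and> s < length ord}. priv M A P Cl r (ord ! s))
       \<union> bnd M A (M - Cl r) \<union> Cl r"

definition Lfac :: "'a cmat \<Rightarrow> 'a set \<Rightarrow> 'a set \<Rightarrow> 'a cmat" where
  "Lfac X B S = (\<lambda>i j. if i \<in> B \<and> j \<in> S then (\<Sum>k\<in>S. X i k * minv S X k j) else 0)"

definition Lmat :: "'a set \<Rightarrow> 'a cmat \<Rightarrow> 'a set \<Rightarrow> 'a set \<Rightarrow> 'a cmat" where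
  "Lmat M X B S = (\<lambda>i j. if i \<in> B \<and> j \<in> S then Lfac X B S i j else idm M i j)"

definition elim_step :: "'a set \<Rightarrow> 'a set \<Rightarrow> 'a set \<Rightarrow> 'a cmat \<times> 'a cmat \<Rightarrow> 'a cmat \<times> 'a cmat" where
  "elim_step M B S st = (let X = fst st; Sig = snd st; Li = minv M (Lmat M X B S) in
      (mmul M Li X, mmul M (mmul M Li Sig) (dag Li)))"

text \<open>elim_state ... t = (A_{g_(t+1)}, Sigma_{g_(t+1)}) in 0-based list indexing,
i.e. the pair before eliminating ord ! t; elim_state ... 0 = (A, Sigma).\<close>
definition elim_state :: "'a set \<Rightarrow> 'a cmat \<Rightarrow> 'a cmat \<Rightarrow> bool list set \<Rightarrow> (bool list \<Rightarrow> 'a set) \<Rightarrow> bool list \<Rightarrow> anode list \<Rightarrow> nat \<Rightarrow> 'a cmat \<times> 'a cmat" where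
  "elim_state M A Sig P Cl r ord t =
     foldl (\<lambda>st g. elim_step M (Bnd M A Cl g) (priv M A P Cl r g) st) (A, Sig) (take t ord)"

end

theory Submission
  imports Defs
begin


locale ctree =
  fixes M :: "'a set" and P :: "bool list set" and Cl :: "bool list \<Rightarrow> 'a set" and r :: "bool list"
  assumes tree: "cluster_tree M P Cl" and leaf: "is_leaf P r"
begin

lemma P0: "[] \<in> P" and root: "Cl [] = M"
  and par: "p @ [b] \<in> P \<Longrightarrow> p \<in> P"
  and piff: "p @ [False] \<in> P \<longleftrightarrow> p @ [True] \<in> P"
  and psplit: "p @ [False] \<in> P \<Longrightarrow> Cl p = Cl (p @ [False]) \<union> Cl (p @ [True]) \<and> Cl (p @ [False]) \<inter> Cl (p @ [True]) = {}"
  using tree unfolding cluster_tree_def by blast+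

lemma rP: "r \<in> P" using leaf by (simp add: is_leaf_def)

lemma child: assumes "p @ [b] \<in> P"
  shows "p \<in> P" "p @ [\<not>b] \<in> P" "p @ [False] \<in> P" "Cl (p @ [b]) \<subseteq> Cl p" "Cl (p @ [b]) \<inter> Cl (p @ [\<not>b]) = {}"
proof -
  show "p \<in> P" using par assms by blast
  have F: "p @ [False] \<in> P" using assms piff by (cases b) auto
  then show "p @ [False] \<in> P" .
  show "p @ [\<not>b] \<in> P" using F piff by (cases b) auto
  show "Cl (p @ [b]) \<subseteq> Cl p" using psplit[OF F] by (cases b) auto
  show "Cl (p @ [b]) \<inter> Cl (p @ [\<not>b]) = {}" using psplit[OF F] by (cases b) auto
qed

lemma app_mono: "p @ x \<in> P \<Longrightarrow> p \<in> P \<and> Cl (p @ x) \<subseteq> Cl p"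
proof (induction x rule: rev_induct)
  case Nil then show ?case by simp
next
  case (snoc b xs)
  have "(p @ xs) @ [b] \<in> P" using snoc.prems by simp
  from child[OF this] snoc.IH show ?case by auto
qed

lemma prefix_mono: "prefix p q \<Longrightarrow> q \<in> P \<Longrightarrow> p \<in> P \<and> Cl q \<subseteq> Cl p"
  using app_mono by (auto simp: prefix_def)

lemma ClM: "p \<in> P \<Longrightarrow> Cl p \<subseteq> M"
  using prefix_mono[of "[]" p] root by simp

lemma par_disj: assumes "p \<in> P" "q \<in> P" "\<not> prefix p q" "\<not> prefix q p"
  shows "Cl p \<inter> Cl q = {}"
proof -
  have "p \<parallel> q" using assms by auto
  from parallel_decomp[OF this] obtain as b bs c cs where
    h: "b \<noteq> c" "p = as @ b # bs" "q = as @ c # cs" by blast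
  have c: "c = (\<not> b)" using h(1) by auto
  have 1: "(as @ [b]) @ bs \<in> P" "(as @ [c]) @ cs \<in> P" using assms h by auto
  have "Cl p \<subseteq> Cl (as @ [b])" using app_mono[OF 1(1)] h by simp
  moreover have "Cl q \<subseteq> Cl (as @ [c])" using app_mono[OF 1(2)] h by simp
  moreover have "Cl (as @ [b]) \<inter> Cl (as @ [\<not> b]) = {}"
    using child(5)[of as b] app_mono[OF 1(1)] by simp
  ultimately show ?thesis using c by blast
qed

abbreviation "d \<equiv> length r"

lemma anc_len: "k \<le> d \<Longrightarrow> length (anc r k) = d - k" by (simp add: anc_def)

lemma anc_split: "k < d \<Longrightarrow> anc r k = take (d - Suc k) r @ [r ! (d - Suc k)]"
proof -
  assume k: "k < d"
  have e: "d - k = Suc (d - Suc k)" using k by simp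
  show ?thesis unfolding anc_def e using take_Suc_conv_app_nth[of "d - Suc k" r] k by simp
qed

lemma anc_prefix_r: "prefix (anc r k) r" by (simp add: anc_def take_is_prefix)

lemma anc_P: "anc r k \<in> P" using prefix_mono[OF anc_prefix_r rP] by simp

lemma Clr_anc: "Cl r \<subseteq> Cl (anc r k)" using prefix_mono[OF anc_prefix_r rP] by simp

lemma anc_anc: "k \<le> k' \<Longrightarrow> prefix (anc r k') (anc r k)"
proof -
  assume "k \<le> k'"
  then have "take (d - k') r = take (d - k') (take (d - k) r)" by (simp add: min_def)
  then show ?thesis unfolding anc_def by (metis take_is_prefix)
qed

lemma anc_mono: "k \<le> k' \<Longrightarrow> Cl (anc r k) \<subseteq> Cl (anc r k')"
  using prefix_mono[OF anc_anc anc_P] by blast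

lemma sib_P: "k < d \<Longrightarrow> sib r k \<in> P"
  using child(2)[of "take (d - Suc k) r" "r ! (d - Suc k)"] anc_split[of k] anc_P[of k]
  by (simp add: sib_def)

lemma sib_anc_disj: "k < d \<Longrightarrow> Cl (sib r k) \<inter> Cl (anc r k) = {}"
  using child(5)[of "take (d - Suc k) r" "r ! (d - Suc k)"] anc_split[of k] anc_P[of k]
  by (auto simp: sib_def)

lemma anc_Suc_sib: "k < d \<Longrightarrow> prefix (anc r (Suc k)) (sib r k)"
  by (simp add: sib_def anc_def)

lemma sib_anc_disj2: "k < d \<Longrightarrow> k' \<le> k \<Longrightarrow> Cl (sib r k) \<inter> Cl (anc r k') = {}"
  using sib_anc_disj anc_mono by blast

lemma anc_prefix_q: "k < k' \<Longrightarrow> k < d \<Longrightarrow> prefix (sib r k) q \<Longrightarrow> prefix (anc r k') q"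
  by (meson Suc_leI anc_Suc_sib anc_anc prefix_order.trans)

end


context ctree begin

abbreviation "N \<equiv> aug_nodes P r"
abbreviation "R \<equiv> aug_child_rel P r"
abbreviation "C \<equiv> aug_cluster M Cl"

lemma N_iff: "x \<in> N \<longleftrightarrow> (\<exists>k. x = Cmp (anc r k) \<and> k + 2 \<le> d) \<or> (\<exists>q k. x = Bas q \<and> k < d \<and> q \<in> P \<and> prefix (sib r k) q)"
  unfolding aug_nodes_def by blast

lemma children_Cmp: "k + 2 \<le> d \<Longrightarrow> aug_children P r (Cmp (anc r k)) =
   Some (Bas (sib r k), if k + 3 \<le> d then Cmp (anc r (Suc k)) else Bas (sib r (Suc k)))"
  unfolding aug_children_def by (simp add: anc_len Let_def)

lemma children_Bas: "aug_children P r (Bas q) = (if q @ [False] \<in> P then Some (Bas (q @ [False]), Bas (q @ [True])) else None)"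
  unfolding aug_children_def by simp

lemma R_iff: "(c, p) \<in> R \<longleftrightarrow> p \<in> N \<and> (\<exists>c1 c2. aug_children P r p = Some (c1, c2) \<and> (c = c1 \<or> c = c2))"
  unfolding aug_child_rel_def by blast

lemma N_sub: "x \<in> N \<Longrightarrow> C x \<subseteq> M - Cl r"
proof -
  assume "x \<in> N"
  then consider k where "x = Cmp (anc r k)" | q k where "x = Bas q" "k < d" "q \<in> P" "prefix (sib r k) q"
    unfolding N_iff by blast
  then show ?thesis
  proof cases
    case 1 then show ?thesis using Clr_anc[of k] by (auto simp: aug_cluster_def)
  next
    case 2
    have "Cl q \<subseteq> Cl (sib r k)" using prefix_mono 2 by blast
    moreover have "Cl (sib r k) \<subseteq> M" using ClM sib_P 2 by blast
    moreover note sib_anc_disj[OF 2(2)] Clr_anc[of k]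
    ultimately show ?thesis using 2 by (auto simp: aug_cluster_def)
  qed
qed

lemma child_N: assumes "x \<in> N" "aug_children P r x = Some (c1, c2)"
  shows "c1 \<in> N \<and> c2 \<in> N \<and> C c1 \<subseteq> C x \<and> C c2 \<subseteq> C x"
proof -
  from assms(1) consider k where "x = Cmp (anc r k)" "k + 2 \<le> d" | q k where "x = Bas q" "k < d" "q \<in> P" "prefix (sib r k) q"
    unfolding N_iff by blast
  then show ?thesis
  proof cases
    case 1
    have e: "c1 = Bas (sib r k)" "c2 = (if k + 3 \<le> d then Cmp (anc r (Suc k)) else Bas (sib r (Suc k)))"
      using assms(2) children_Cmp[OF 1(2)] 1(1) by auto
    have kd: "k < d" using 1 by simp
    have a: "c1 \<in> N" unfolding N_iff e
      by (intro disjI2 exI[of _ "sib r k"] exI[of _ k]) (auto simp: sib_P kd)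
    have b: "C c1 \<subseteq> C x" using e 1 ClM[OF sib_P[of k]] sib_anc_disj[of k] by (auto simp: aug_cluster_def)
    show ?thesis
    proof (cases "k + 3 \<le> d")
      case True
      then show ?thesis using a b e 1 anc_mono[of k "Suc k"] unfolding N_iff
        by (auto simp: aug_cluster_def)
    next
      case False
      have "Bas (sib r (Suc k)) \<in> N" unfolding N_iff
        by (intro disjI2 exI[of _ "sib r (Suc k)"] exI[of _ "Suc k"]) (use 1 False in \<open>auto simp: sib_P\<close>)
      then show ?thesis using False a b e 1 sib_P[of "Suc k"] ClM[OF sib_P[of "Suc k"]] sib_anc_disj2[of "Suc k" k] unfolding N_iff
        by (auto simp: aug_cluster_def)
    qed
  next
    case 2
    have F: "q @ [False] \<in> P" and e: "c1 = Bas (q @ [False])" "c2 = Bas (q @ [True])"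
      using assms(2) 2(1) children_Bas[of q] by (auto split: if_splits)
    have T: "q @ [True] \<in> P" using F piff by blast
    have "prefix (sib r k) (q @ [False])" "prefix (sib r k) (q @ [True])" using 2(4)
      by (auto intro: prefix_order.trans)
    then show ?thesis using e F T 2 child(4)[OF F] child(4)[OF T] unfolding N_iff
      by (auto simp: aug_cluster_def)
  qed
qed

lemma R_edge: "(c, p) \<in> R \<Longrightarrow> c \<in> N \<and> p \<in> N \<and> C c \<subseteq> C p"
  using child_N unfolding R_iff by blast

lemma R_C: "(x, y) \<in> R\<^sup>+ \<Longrightarrow> C x \<subseteq> C y \<and> x \<in> N \<and> y \<in> N"
proof (induction rule: trancl_induct)
  case (base y) then show ?case using R_edge by blast
next
  case (step y z) then show ?case using R_edge by blast
qed

lemma CC: "k < k' \<Longrightarrow> k' + 2 \<le> d \<Longrightarrow> (Cmp (anc r k'), Cmp (anc r k)) \<in> R\<^sup>+"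
proof (induction k')
  case 0 then show ?case by simp
next
  case (Suc m)
  have "Cmp (anc r m) \<in> N" using Suc.prems unfolding N_iff by auto
  then have e: "(Cmp (anc r (Suc m)), Cmp (anc r m)) \<in> R"
    using children_Cmp[of m] Suc.prems unfolding R_iff by auto
  show ?case
  proof (cases "m = k")
    case True then show ?thesis using e by auto
  next
    case False
    then have "(Cmp (anc r m), Cmp (anc r k)) \<in> R\<^sup>+" using Suc by auto
    then show ?thesis using e by (meson trancl_into_trancl2)
  qed
qed

lemma BB: "prefix p q \<Longrightarrow> p \<noteq> q \<Longrightarrow> q \<in> P \<Longrightarrow> prefix (sib r k) p \<Longrightarrow> k < d \<Longrightarrow> (Bas q, Bas p) \<in> R\<^sup>+"
proof (induction q rule: rev_induct)
  case Nil then show ?case by simp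
next
  case (snoc b q0)
  have pq0: "prefix p q0" using snoc.prems(1,2) by (simp add: prefix_snoc)
  have q0P: "q0 \<in> P" and F: "q0 @ [False] \<in> P" using child[OF snoc.prems(3)] by auto
  have "Bas q0 \<in> N" using q0P snoc.prems(4,5) pq0 unfolding N_iff by (blast intro: prefix_order.trans)
  then have e: "(Bas (q0 @ [b]), Bas q0) \<in> R" using F children_Bas[of q0] unfolding R_iff by (cases b) auto
  show ?case
  proof (cases "p = q0")
    case True then show ?thesis using e by auto
  next
    case False
    then have "(Bas q0, Bas p) \<in> R\<^sup>+" using snoc pq0 q0P by auto
    then show ?thesis using e by (meson trancl_into_trancl2)
  qed
qed

lemma Bedge: assumes "k < d" "2 \<le> d"
  shows "(Bas (sib r k), Cmp (anc r (min k (d - 2)))) \<in> R"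
proof (cases "k + 2 \<le> d")
  case True
  then have "Cmp (anc r k) \<in> N" unfolding N_iff by auto
  then show ?thesis using True children_Cmp[of k] unfolding R_iff by (auto simp: min_def)
next
  case False
  then have k: "k = d - 1" "min k (d - 2) = d - 2" using assms by auto
  have "Cmp (anc r (d - 2)) \<in> N" using assms unfolding N_iff by auto
  moreover have "Suc (d - 2) = k" using k assms by auto
  ultimately show ?thesis using children_Cmp[of "d - 2"] assms k unfolding R_iff by auto
qed

lemma BC: assumes "k' \<le> k" "k < d" "k' + 2 \<le> d" "q \<in> P" "prefix (sib r k) q"
  shows "(Bas q, Cmp (anc r k')) \<in> R\<^sup>+"
proof -
  define j where "j = min k (d - 2)"
  have e: "(Bas (sib r k), Cmp (anc r j)) \<in> R" using Bedge assms j_def by auto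
  have 1: "(Bas q, Bas (sib r k)) \<in> R\<^sup>*"
    using BB[of "sib r k" q k] assms by (cases "q = sib r k") auto
  have 2: "(Cmp (anc r j), Cmp (anc r k')) \<in> R\<^sup>*"
  proof (cases "k' = j")
    case False
    then have "k' < j" "j + 2 \<le> d" using assms j_def by auto
    then show ?thesis using CC[of k' j] by auto
  qed simp
  show ?thesis using 1 e 2 by (meson rtrancl_into_trancl1 trancl_rtrancl_trancl)
qed

lemma laminar: assumes "x \<in> N" "y \<in> N" "x \<noteq> y"
  shows "(x, y) \<in> R\<^sup>+ \<or> (y, x) \<in> R\<^sup>+ \<or> C x \<inter> C y = {}"
proof -
  have BCd: "C (Bas q) \<inter> C (Cmp (anc r k')) = {}" if "k < k'" "k < d" "prefix (sib r k) q" "q \<in> P" for q k k'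
  proof -
    have "Cl q \<subseteq> Cl (anc r k')" using prefix_mono[OF anc_prefix_q[OF that(1-3)] that(4)] by blast
    then show ?thesis by (auto simp: aug_cluster_def)
  qed
  from assms(1) consider k where "x = Cmp (anc r k)" "k + 2 \<le> d" | q k where "x = Bas q" "k < d" "q \<in> P" "prefix (sib r k) q"
    unfolding N_iff by blast
  then show ?thesis
  proof cases
    case x: 1
    from assms(2) consider k' where "y = Cmp (anc r k')" "k' + 2 \<le> d" | q' k' where "y = Bas q'" "k' < d" "q' \<in> P" "prefix (sib r k') q'"
      unfolding N_iff by blast
    then show ?thesis
    proof cases
      case y: 1
      then have "k \<noteq> k'" using x assms(3) by auto
      then show ?thesis using CC[of k k'] CC[of k' k] x y by (cases "k < k'") auto
    next
      case y: 2
      show ?thesis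
      proof (cases "k \<le> k'")
        case True then show ?thesis using BC[of k k' q'] x y by auto
      next
        case False then show ?thesis using BCd[of k' k q'] x y by auto
      qed
    qed
  next
    case x: 2
    from assms(2) consider k' where "y = Cmp (anc r k')" "k' + 2 \<le> d" | q' k' where "y = Bas q'" "k' < d" "q' \<in> P" "prefix (sib r k') q'"
      unfolding N_iff by blast
    then show ?thesis
    proof cases
      case y: 1
      show ?thesis
      proof (cases "k' \<le> k")
        case True then show ?thesis using BC[of k' k q] x y by auto
      next
        case False then show ?thesis using BCd[of k k' q] x y by auto
      qed
    next
      case y: 2
      have "q \<noteq> q'" using x y assms(3) by auto
      show ?thesis
      proof (cases "prefix q q'")
        case True then show ?thesis using BB[of q q' k] x y \<open>q \<noteq> q'\<close> by auto
      next
        case False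
        show ?thesis
        proof (cases "prefix q' q")
          case True then show ?thesis using BB[of q' q k'] x y \<open>q \<noteq> q'\<close> by auto
        next
          case False2: False
          then show ?thesis using par_disj[of q q'] x y False by (auto simp: aug_cluster_def)
        qed
      qed
    qed
  qed
qed

end


lemma idm_sumL: "finite M \<Longrightarrow> i \<in> M \<Longrightarrow> (\<Sum>k\<in>M. idm M i k * f k) = f i"
proof -
  assume a: "finite M" "i \<in> M"
  have "(\<Sum>k\<in>M. idm M i k * f k) = (\<Sum>k\<in>M. if i = k then f k else 0)"
    by (rule sum.cong) (auto simp: idm_def)
  also have "\<dots> = f i" using a by simp
  finally show ?thesis .
qed

lemma idm_sumR: "finite M \<Longrightarrow> j \<in> M \<Longrightarrow> (\<Sum>k\<in>M. f k * idm M k j) = f j"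
proof -
  assume a: "finite M" "j \<in> M"
  have "(\<Sum>k\<in>M. f k * idm M k j) = (\<Sum>k\<in>M. if k = j then f k else 0)"
    by (rule sum.cong) (auto simp: idm_def)
  also have "\<dots> = f j" using a by simp
  finally show ?thesis .
qed

lemma idm_sym: "idm M i j = idm M j i" by (auto simp: idm_def)

lemma inv_unique:
  assumes fin: "finite K" and 1: "is_inv_on K X Y1" and 2: "is_inv_on K X Y2"
  shows "Y1 = Y2"
proof (intro ext)
  fix i j
  show "Y1 i j = Y2 i j"
  proof (cases "i \<in> K \<and> j \<in> K")
    case True
    have "Y1 i j = (\<Sum>k\<in>K. Y1 i k * idm K k j)" using idm_sumR[OF fin] True by simp
    also have "\<dots> = (\<Sum>k\<in>K. Y1 i k * (\<Sum>l\<in>K. X k l * Y2 l j))"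
      using 2 True unfolding is_inv_on_def by (intro sum.cong) auto
    also have "\<dots> = (\<Sum>k\<in>K. \<Sum>l\<in>K. Y1 i k * X k l * Y2 l j)"
      by (simp add: sum_distrib_left mult.assoc)
    also have "\<dots> = (\<Sum>l\<in>K. \<Sum>k\<in>K. Y1 i k * X k l * Y2 l j)" by (rule sum.swap)
    also have "\<dots> = (\<Sum>l\<in>K. (\<Sum>k\<in>K. Y1 i k * X k l) * Y2 l j)"
      by (simp add: sum_distrib_right)
    also have "\<dots> = (\<Sum>l\<in>K. idm K i l * Y2 l j)"
      using 1 True unfolding is_inv_on_def by (intro sum.cong) auto
    also have "\<dots> = Y2 i j" using idm_sumL[OF fin] True by simp
    finally show ?thesis .
  next
    case False
    then show ?thesis using 1 2 unfolding is_inv_on_def by auto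
  qed
qed

lemma minv_eq: "finite K \<Longrightarrow> is_inv_on K X Y \<Longrightarrow> minv K X = Y"
  unfolding minv_def by (rule the_equality) (auto intro: inv_unique)

lemma Lfac_nz: "Lfac X B S a b \<noteq> 0 \<Longrightarrow> a \<in> B \<and> b \<in> S"
  unfolding Lfac_def by (auto split: if_splits)

lemma Lmat_inv:
  assumes fin: "finite M" and BM: "B \<subseteq> M" and SM: "S \<subseteq> M" and disj: "B \<inter> S = {}"
  shows "minv M (Lmat M X B S) = (\<lambda>i j. idm M i j - Lfac X B S i j)"
proof (rule minv_eq[OF fin])
  define E where "E = Lfac X B S"
  have Enz: "E a b \<noteq> 0 \<Longrightarrow> a \<in> B \<and> b \<in> S" for a b unfolding E_def by (rule Lfac_nz)
  have L: "Lmat M X B S = (\<lambda>i j. idm M i j + E i j)"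
  proof (intro ext)
    fix i j
    show "Lmat M X B S i j = idm M i j + E i j"
    proof (cases "i \<in> B \<and> j \<in> S")
      case True
      then have "i \<noteq> j" using disj by auto
      then show ?thesis using True by (simp add: Lmat_def idm_def E_def)
    next
      case False
      then have "E i j = 0" using Enz by blast
      then show ?thesis using False by (auto simp: Lmat_def E_def)
    qed
  qed
  have EE: "E i k * E k j = 0" for i k j
  proof (cases "E i k = 0")
    case False
    then have "k \<in> S" using Enz by blast
    then have "k \<notin> B" using disj by blast
    then have "E k j = 0" using Enz by blast
    then show ?thesis by simp
  qed simp
  have EM: "E i j = 0" if "i \<notin> M \<or> j \<notin> M" for i j
  proof (rule ccontr)
    assume "E i j \<noteq> 0"
    then have "i \<in> B" "j \<in> S" using Enz by auto
    then show False using that BM SM by blast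
  qed
  have EE0: "(\<Sum>k\<in>M. E i k * E k j) = 0" for i j using EE by (intro sum.neutral) blast
  have p1: "(\<Sum>k\<in>M. (idm M i k + E i k) * (idm M k j - E k j)) = idm M i j" if "i \<in> M" "j \<in> M" for i j
  proof -
    have a: "(\<Sum>k\<in>M. (idm M i k + E i k) * (idm M k j - E k j)) = (\<Sum>k\<in>M. idm M i k * (idm M k j - E k j)) + (\<Sum>k\<in>M. E i k * (idm M k j - E k j))"
      by (simp only: distrib_right sum.distrib)
    have b: "(\<Sum>k\<in>M. idm M i k * (idm M k j - E k j)) = idm M i j - E i j" using idm_sumL[OF fin that(1)] .
    have c: "(\<Sum>k\<in>M. E i k * (idm M k j - E k j)) = (\<Sum>k\<in>M. E i k * idm M k j) - (\<Sum>k\<in>M. E i k * E k j)"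
      by (simp only: right_diff_distrib sum_subtractf)
    have e: "(\<Sum>k\<in>M. E i k * idm M k j) = E i j" using idm_sumR[OF fin that(2)] .
    show ?thesis unfolding a b c e EE0 by simp
  qed
  have p2: "(\<Sum>k\<in>M. (idm M i k - E i k) * (idm M k j + E k j)) = idm M i j" if "i \<in> M" "j \<in> M" for i j
  proof -
    have a: "(\<Sum>k\<in>M. (idm M i k - E i k) * (idm M k j + E k j)) = (\<Sum>k\<in>M. idm M i k * (idm M k j + E k j)) - (\<Sum>k\<in>M. E i k * (idm M k j + E k j))"
      by (simp only: left_diff_distrib sum_subtractf)
    have b: "(\<Sum>k\<in>M. idm M i k * (idm M k j + E k j)) = idm M i j + E i j" using idm_sumL[OF fin that(1)] .
    have c: "(\<Sum>k\<in>M. E i k * (idm M k j + E k j)) = (\<Sum>k\<in>M. E i k * idm M k j) + (\<Sum>k\<in>M. E i k * E k j)"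
      by (simp only: distrib_left sum.distrib)
    have e: "(\<Sum>k\<in>M. E i k * idm M k j) = E i j" using idm_sumR[OF fin that(2)] .
    show ?thesis unfolding a b c e EE0 by simp
  qed
  have z: "idm M i j - E i j = 0" if "i \<notin> M \<or> j \<notin> M" for i j
    using EM[OF that] that by (auto simp: idm_def)
  show "is_inv_on M (Lmat M X B S) (\<lambda>i j. idm M i j - Lfac X B S i j)"
    unfolding is_inv_on_def L E_def[symmetric]
  proof (intro conjI ballI allI impI)
    fix i j assume "i \<in> M" "j \<in> M"
    then show "(\<Sum>k\<in>M. (idm M i k + E i k) * (idm M k j - E k j)) = idm M i j"
      "(\<Sum>k\<in>M. (idm M i k - E i k) * (idm M k j + E k j)) = idm M i j" using p1 p2 by auto
  next
    fix i j assume "i \<notin> M \<or> j \<notin> M"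
    then show "idm M i j - E i j = 0" by (rule z)
  qed
qed

lemma expand:
  assumes fin: "finite M" and SM: "S \<subseteq> M" and Ez: "\<And>a b. b \<notin> S \<Longrightarrow> E a b = 0"
    and i: "i \<in> M" and j: "j \<in> M"
  shows "mmul M (mmul M (\<lambda>a b. idm M a b - E a b) X) (dag (\<lambda>a b. idm M a b - E a b)) i j =
     X i j - (\<Sum>k\<in>S. E i k * X k j) - (\<Sum>k\<in>S. X i k * cnj (E j k))
       + (\<Sum>k\<in>S. \<Sum>l\<in>S. E i k * X k l * cnj (E j l))"
proof -
  have red: "(\<Sum>k\<in>M. f k) = (\<Sum>k\<in>S. f k)" if "\<And>k. k \<notin> S \<Longrightarrow> f k = 0" for f :: "'a \<Rightarrow> complex"
    using sum.mono_neutral_right[OF fin SM] that by (metis DiffD2)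
  define F where "F l = X i l - (\<Sum>k\<in>S. E i k * X k l)" for l
  have 1: "(\<Sum>k\<in>M. (idm M i k - E i k) * X k l) = F l" for l
  proof -
    have "(\<Sum>k\<in>M. (idm M i k - E i k) * X k l) = (\<Sum>k\<in>M. idm M i k * X k l) - (\<Sum>k\<in>M. E i k * X k l)"
      by (simp add: algebra_simps sum_subtractf)
    also have "\<dots> = F l" unfolding F_def using idm_sumL[OF fin i] red[of "\<lambda>k. E i k * X k l"] Ez by simp
    finally show ?thesis .
  qed
  have cidm: "cnj (idm M j l) = idm M l j" for l by (auto simp: idm_def)
  have A1: "mmul M (mmul M (\<lambda>a b. idm M a b - E a b) X) (dag (\<lambda>a b. idm M a b - E a b)) i j
      = (\<Sum>l\<in>M. F l * (idm M l j - cnj (E j l)))"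
    unfolding mmul_def dag_def by (intro sum.cong refl) (simp only: 1 cidm complex_cnj_diff)
  have A2: "(\<Sum>l\<in>M. F l * (idm M l j - cnj (E j l))) = (\<Sum>l\<in>M. F l * idm M l j) - (\<Sum>l\<in>M. F l * cnj (E j l))"
    by (simp only: right_diff_distrib sum_subtractf)
  have A3: "(\<Sum>l\<in>M. F l * idm M l j) = F j" using idm_sumR[OF fin j] .
  have A4: "(\<Sum>l\<in>M. F l * cnj (E j l)) = (\<Sum>l\<in>S. F l * cnj (E j l))"
    using red[of "\<lambda>l. F l * cnj (E j l)"] Ez by simp
  have A5: "(\<Sum>l\<in>S. F l * cnj (E j l)) = (\<Sum>l\<in>S. X i l * cnj (E j l)) - (\<Sum>l\<in>S. \<Sum>k\<in>S. E i k * X k l * cnj (E j l))"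
  proof -
    have "(\<Sum>l\<in>S. F l * cnj (E j l)) = (\<Sum>l\<in>S. X i l * cnj (E j l) - (\<Sum>k\<in>S. E i k * X k l * cnj (E j l)))"
      by (rule sum.cong) (simp_all only: F_def left_diff_distrib sum_distrib_right)
    then show ?thesis by (simp only: sum_subtractf)
  qed
  have A6: "(\<Sum>l\<in>S. \<Sum>k\<in>S. E i k * X k l * cnj (E j l)) = (\<Sum>k\<in>S. \<Sum>l\<in>S. E i k * X k l * cnj (E j l))"
    by (rule sum.swap)
  have ar: "x - a - (b - c) = x - a - b + (c::complex)" for x a b c by simp
  have "mmul M (mmul M (\<lambda>a b. idm M a b - E a b) X) (dag (\<lambda>a b. idm M a b - E a b)) i j
     = F j - ((\<Sum>l\<in>S. X i l * cnj (E j l)) - (\<Sum>k\<in>S. \<Sum>l\<in>S. E i k * X k l * cnj (E j l)))"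
    unfolding A1 A2 A3 A4 A5 A6 ..
  then show ?thesis by (simp only: F_def ar)
qed



lemma formula_eq:
  fixes X E :: "'a cmat"
  assumes "(\<forall>k\<in>S. E a k = 0 \<and> X a k = 0) \<or> (\<forall>k\<in>S. E b k = 0 \<and> X k b = 0) \<or> (\<forall>k\<in>S. E a k = 0 \<and> E b k = 0)"
  shows "X a b - (\<Sum>k\<in>S. E a k * X k b) - (\<Sum>k\<in>S. X a k * cnj (E b k))
       + (\<Sum>k\<in>S. \<Sum>l\<in>S. E a k * X k l * cnj (E b l)) = X a b"
  using assms by auto

lemma inner_mono: "X \<subseteq> Y \<Longrightarrow> inner M A X \<subseteq> inner M A Y"
  unfolding inner_def bnd_def by blast

lemma bnd_restr: "X \<subseteq> Y \<Longrightarrow> bnd M A Y \<inter> X \<subseteq> bnd M A X"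
  unfolding bnd_def by blast

lemma elim_Suc: "t < length ord \<Longrightarrow> elim_state M A Sig P Cl r ord (Suc t) =
   elim_step M (Bnd M A Cl (ord ! t)) (priv M A P Cl r (ord ! t)) (elim_state M A Sig P Cl r ord t)"
  unfolding elim_state_def by (simp add: take_Suc_conv_app_nth)

lemma elim_0: "elim_state M A Sig P Cl r ord 0 = (A, Sig)"
  unfolding elim_state_def by simp

locale fnd = ctree M P Cl r for M :: "'a set" and P Cl r +
  fixes A :: "'a cmat" and Sig :: "'a cmat" and ord :: "anode list"
  assumes ordering: "consistent_ordering P r ord" and finM: "finite M"
begin

abbreviation "Bn x \<equiv> Bnd M A Cl x"
abbreviation "In x \<equiv> Inn M A Cl x"
abbreviation "Sp x \<equiv> priv M A P Cl r x"
abbreviation "n \<equiv> length ord"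
abbreviation "Sle t \<equiv> S_le M A P Cl r ord t"
abbreviation "Sgt t \<equiv> S_gt M A P Cl r ord t"
abbreviation "es t \<equiv> elim_state M A Sig P Cl r ord t"

lemma ord_N: "s < n \<Longrightarrow> ord ! s \<in> N"
  using ordering nth_mem unfolding consistent_ordering_def by blast

lemma ord_ex: "x \<in> N \<Longrightarrow> \<exists>s<n. ord ! s = x"
  using ordering unfolding consistent_ordering_def by (metis in_set_conv_nth)

lemma ord_lt: "s < n \<Longrightarrow> t < n \<Longrightarrow> (ord ! s, ord ! t) \<in> R\<^sup>+ \<Longrightarrow> s < t"
  using ordering unfolding consistent_ordering_def by blast

lemma ord_inj: "s < n \<Longrightarrow> t < n \<Longrightarrow> s \<noteq> t \<Longrightarrow> ord ! s \<noteq> ord ! t"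
  using ordering unfolding consistent_ordering_def by (simp add: nth_eq_iff_index_eq)

lemma In_eq: "In x = C x - Bn x" unfolding Inn_def Bnd_def inner_def ..
lemma Bn_C: "Bn x \<subseteq> C x" unfolding Bnd_def bnd_def by blast
lemma Sp_In: "Sp x \<subseteq> In x" unfolding priv_def by (auto split: option.splits)
lemma Sp_C: "Sp x \<subseteq> C x" using Sp_In In_eq by blast
lemma BS_disj: "Bn x \<inter> Sp x = {}" using Sp_In In_eq by blast

lemma D1a: assumes "(x, y) \<in> R\<^sup>+" shows "Sp x \<inter> Sp y = {}"
proof -
  obtain c where c: "(c, y) \<in> R" "x = c \<or> (x, c) \<in> R\<^sup>+"
    using assms by (rule tranclE) auto
  obtain c1 c2 where ch: "aug_children P r y = Some (c1, c2)" "c = c1 \<or> c = c2"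
    using c(1) unfolding R_iff by blast
  have "In x \<subseteq> In c"
    using c(2) R_C[of x c] inner_mono unfolding Inn_def by blast
  moreover have "Sp y = In y - (In c1 \<union> In c2)" using ch(1) unfolding priv_def by simp
  ultimately show ?thesis using Sp_In[of x] ch(2) by blast
qed

lemma D1: "x \<in> N \<Longrightarrow> y \<in> N \<Longrightarrow> x \<noteq> y \<Longrightarrow> Sp x \<inter> Sp y = {}"
  using laminar[of x y] D1a[of x y] D1a[of y x] Sp_C[of x] Sp_C[of y] by blast

lemma D2: "x \<in> N \<Longrightarrow> Sp x \<inter> (bnd M A (M - Cl r) \<union> Cl r) = {}"
proof -
  assume x: "x \<in> N"
  have "In x \<subseteq> inner M A (M - Cl r)" unfolding Inn_def using inner_mono N_sub[OF x] by blast
  then show ?thesis using Sp_In[of x] unfolding inner_def by blast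
qed

lemma Sle_mem: "y \<in> Sle t \<longleftrightarrow> (\<exists>s. s \<le> t \<and> s < n \<and> y \<in> Sp (ord ! s))"
  unfolding S_le_def by blast

lemma Sgt_mem: "y \<in> Sgt t \<longleftrightarrow> (\<exists>s. t < s \<and> s < n \<and> y \<in> Sp (ord ! s)) \<or> y \<in> bnd M A (M - Cl r) \<or> y \<in> Cl r"
  unfolding S_gt_def by blast

lemma D3: "Sle t \<inter> Sgt t = {}"
proof -
  { fix y assume a: "y \<in> Sle t" "y \<in> Sgt t"
    from a(1) obtain s where s: "s \<le> t" "s < n" "y \<in> Sp (ord ! s)" unfolding Sle_mem by blast
    have False
    proof (cases "\<exists>s'. t < s' \<and> s' < n \<and> y \<in> Sp (ord ! s')")
      case True
      then obtain s' where s': "t < s'" "s' < n" "y \<in> Sp (ord ! s')" by blast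
      have "ord ! s \<noteq> ord ! s'" using ord_inj s s' by simp
      then show False using D1[OF ord_N[OF s(2)] ord_N[OF s'(2)]] s s' by blast
    next
      case False
      then have "y \<in> bnd M A (M - Cl r) \<union> Cl r" using a(2) unfolding Sgt_mem by blast
      then show False using D2[OF ord_N[OF s(2)]] s by blast
    qed }
  then show ?thesis by blast
qed

lemma Sle_mono: "s \<le> t \<Longrightarrow> Sle s \<subseteq> Sle t"
  unfolding S_le_def by (rule UN_mono) auto

lemma D4: "t < n \<Longrightarrow> In (ord ! t) \<subseteq> Sle t"
proof (induction t rule: less_induct)
  case (less t)
  have own: "Sp (ord ! t) \<subseteq> Sle t" using less.prems unfolding S_le_def by blast
  show ?case
  proof (cases "aug_children P r (ord ! t)")
    case None
    then have "Sp (ord ! t) = In (ord ! t)" unfolding priv_def by simp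
    then show ?thesis using own by simp
  next
    case (Some cc)
    obtain c1 c2 where cc: "cc = (c1, c2)" by (cases cc)
    have eq: "Sp (ord ! t) = In (ord ! t) - (In c1 \<union> In c2)" using Some cc unfolding priv_def by simp
    have ch: "In c \<subseteq> Sle t" if c: "c = c1 \<or> c = c2" for c
    proof -
      have cN: "c \<in> N" using child_N[OF ord_N[OF less.prems]] Some cc c by blast
      then obtain s where s: "s < n" "ord ! s = c" using ord_ex by blast
      have "(c, ord ! t) \<in> R" using ord_N[OF less.prems] Some cc c unfolding R_iff by blast
      then have "s < t" using ord_lt[OF s(1) less.prems] s by auto
      then show ?thesis using less.IH[OF \<open>s < t\<close> s(1)] s Sle_mono[of s t] by auto
    qed
    show ?thesis using eq own ch[of c1] ch[of c2] by blast
  qed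
qed

lemma D5: "s < n \<Longrightarrow> C (ord ! s) \<inter> Sgt s \<subseteq> Bn (ord ! s)"
  using D4[of s] D3[of s] In_eq[of "ord ! s"] by blast

lemma Sp_M: "x \<in> N \<Longrightarrow> Sp x \<subseteq> M" using Sp_C N_sub by blast
lemma Bn_M: "x \<in> N \<Longrightarrow> Bn x \<subseteq> M" using Bn_C N_sub by blast

lemma Sgt_M: "Sgt t \<subseteq> M"
proof -
  have "Cl r \<subseteq> M" using ClM rP by blast
  moreover have "bnd M A (M - Cl r) \<subseteq> M" unfolding bnd_def by blast
  moreover have "Sp (ord ! s) \<subseteq> M" if "s < n" for s using Sp_M ord_N that by blast
  ultimately show ?thesis unfolding S_gt_def by blast
qed

lemma Sle_M: "Sle t \<subseteq> M"
proof -
  have "Sp (ord ! s) \<subseteq> M" if "s < n" for s using Sp_M ord_N that by blast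
  then show ?thesis unfolding S_le_def by blast
qed

lemma Sgt_mono: "t \<le> s \<Longrightarrow> Sgt s \<subseteq> Sgt t" unfolding S_gt_def by (intro Un_mono UN_mono) auto

lemma Sp_Sgt: "t < s \<Longrightarrow> s < n \<Longrightarrow> Sp (ord ! s) \<subseteq> Sgt t" unfolding S_gt_def by auto

lemma key1:
  assumes ts: "t < s" "s < n" and i: "i \<in> Sp (ord ! s)" "i \<in> Bn (ord ! t)"
    and j: "j \<in> Bn (ord ! t)" "j \<in> Sgt s"
  shows "j \<in> Bn (ord ! s)"
proof -
  have tn: "t < n" using ts by simp
  have ne: "ord ! s \<noteq> ord ! t" using ord_inj ts by simp
  from laminar[OF ord_N[OF ts(2)] ord_N[OF tn] ne] show ?thesis
  proof (elim disjE)
    assume "(ord ! s, ord ! t) \<in> R\<^sup>+"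
    then have "s < t" using ord_lt ts tn by blast
    then show ?thesis using ts by simp
  next
    assume "(ord ! t, ord ! s) \<in> R\<^sup>+"
    then have "C (ord ! t) \<subseteq> C (ord ! s)" using R_C by blast
    then show ?thesis using j Bn_C[of "ord ! t"] D5[OF ts(2)] by blast
  next
    assume "C (ord ! s) \<inter> C (ord ! t) = {}"
    then show ?thesis using i Sp_C[of "ord ! s"] Bn_C[of "ord ! t"] by blast
  qed
qed

lemma key2:
  assumes "s \<le> t" "t < n"
  shows "Sp (ord ! s) \<inter> Bn (ord ! t) = {}"
proof (cases "s = t")
  case True then show ?thesis using BS_disj by blast
next
  case False
  then have st: "s < t" "s < n" using assms by auto
  have ne: "ord ! s \<noteq> ord ! t" using ord_inj st assms by simp
  from laminar[OF ord_N[OF st(2)] ord_N[OF assms(2)] ne] show ?thesis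
  proof (elim disjE)
    assume "(ord ! t, ord ! s) \<in> R\<^sup>+"
    then have "t < s" using ord_lt st assms by blast
    then show ?thesis using st by simp
  next
    assume "(ord ! s, ord ! t) \<in> R\<^sup>+"
    then have "C (ord ! s) \<subseteq> C (ord ! t)" using R_C by blast
    then have "Bn (ord ! t) \<inter> C (ord ! s) \<subseteq> Bn (ord ! s)"
      unfolding Bnd_def by (rule bnd_restr)
    then show ?thesis using Sp_C[of "ord ! s"] BS_disj[of "ord ! s"] by blast
  next
    assume "C (ord ! s) \<inter> C (ord ! t) = {}"
    then show ?thesis using Sp_C[of "ord ! s"] Bn_C[of "ord ! t"] by blast
  qed
qed

lemma step:
  assumes t: "t < n" and i: "i \<in> M" and j: "j \<in> M"
  defines "E \<equiv> Lfac (fst (es t)) (Bn (ord ! t)) (Sp (ord ! t))"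
  shows "snd (es (Suc t)) i j = snd (es t) i j - (\<Sum>k\<in>Sp (ord ! t). E i k * snd (es t) k j)
     - (\<Sum>k\<in>Sp (ord ! t). snd (es t) i k * cnj (E j k))
     + (\<Sum>k\<in>Sp (ord ! t). \<Sum>l\<in>Sp (ord ! t). E i k * snd (es t) k l * cnj (E j l))"
proof -
  have BM: "Bn (ord ! t) \<subseteq> M" and SM: "Sp (ord ! t) \<subseteq> M" using Bn_M Sp_M ord_N[OF t] by auto
  have inv: "minv M (Lmat M (fst (es t)) (Bn (ord ! t)) (Sp (ord ! t))) = (\<lambda>a b. idm M a b - E a b)"
    unfolding E_def using Lmat_inv[OF finM BM SM BS_disj] .
  have Ez: "b \<notin> Sp (ord ! t) \<Longrightarrow> E a b = 0" for a b unfolding E_def Lfac_def by simp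
  show ?thesis
    unfolding elim_Suc[OF t] elim_step_def Let_def inv snd_conv
    by (rule expand[OF finM SM Ez i j])
qed

lemma Ez_row: "a \<notin> Bn (ord ! t) \<Longrightarrow> Lfac X (Bn (ord ! t)) S a b = 0"
  unfolding Lfac_def by simp

end



context fnd begin

lemma I_holds:
  assumes Asym: "\<forall>i\<in>M. \<forall>j\<in>M. A i j \<noteq> 0 \<longleftrightarrow> A j i \<noteq> 0"
    and Sig_sparse: "\<forall>i\<in>M. \<forall>j\<in>M. i \<noteq> j \<and> A i j = 0 \<longrightarrow> Sig i j = 0"
  shows "t \<le> n \<Longrightarrow> \<forall>s. t \<le> s \<and> s < n \<longrightarrow>
     (\<forall>i\<in>Sp (ord ! s). \<forall>j\<in>Sgt s - Bn (ord ! s). snd (es t) i j = 0 \<and> snd (es t) j i = 0)"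
proof (induction t)
  case 0
  show ?case
  proof (intro allI impI ballI)
    fix s i j assume s: "0 \<le> s \<and> s < n" and i: "i \<in> Sp (ord ! s)" and j: "j \<in> Sgt s - Bn (ord ! s)"
    have hN: "ord ! s \<in> N" using ord_N s by blast
    have iM: "i \<in> M" using Sp_M[OF hN] i by blast
    have jM: "j \<in> M" using Sgt_M j by blast
    have jC: "j \<notin> C (ord ! s)" using D5[of s] s j by blast
    have iI: "i \<in> inner M A (C (ord ! s))" using Sp_In i unfolding Inn_def by blast
    have Aij: "A i j = 0" using iI jM jC unfolding inner_def bnd_def by blast
    have ij: "i \<noteq> j" using iI jC unfolding inner_def by blast
    have Aji: "A j i = 0" using Asym iM jM Aij by blast
    show "snd (es 0) i j = 0 \<and> snd (es 0) j i = 0"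
      using Sig_sparse iM jM ij Aij Aji by (auto simp: elim_0)
  qed
next
  case (Suc t)
  have tn: "t < n" using Suc.prems by simp
  have IH: "\<forall>s. t \<le> s \<and> s < n \<longrightarrow>
     (\<forall>i\<in>Sp (ord ! s). \<forall>j\<in>Sgt s - Bn (ord ! s). snd (es t) i j = 0 \<and> snd (es t) j i = 0)"
    using Suc.IH Suc.prems by simp
  define g where "g = ord ! t"
  define X where "X = snd (es t)"
  define E where "E = Lfac (fst (es t)) (Bn g) (Sp g)"
  have IH0: "\<forall>l\<in>Sp g. \<forall>x\<in>Sgt t - Bn g. X l x = 0 \<and> X x l = 0" using IH tn unfolding g_def X_def by blast
  have Erow: "a \<notin> Bn g \<Longrightarrow> E a b = 0" for a b by (simp add: E_def Lfac_def)
  have st: "snd (es (Suc t)) a b = X a b - (\<Sum>k\<in>Sp g. E a k * X k b) - (\<Sum>k\<in>Sp g. X a k * cnj (E b k))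
      + (\<Sum>k\<in>Sp g. \<Sum>l\<in>Sp g. E a k * X k l * cnj (E b l))" if "a \<in> M" "b \<in> M" for a b
    unfolding X_def E_def g_def by (rule step[OF tn that])
  show ?case
  proof (intro allI impI ballI)
    fix s i j assume s: "Suc t \<le> s \<and> s < n" and i: "i \<in> Sp (ord ! s)" and j: "j \<in> Sgt s - Bn (ord ! s)"
    have hN: "ord ! s \<in> N" using ord_N s by blast
    have iM: "i \<in> M" using Sp_M[OF hN] i by blast
    have jM: "j \<in> M" using Sgt_M j by blast
    have iS: "i \<in> Sgt t" using Sp_Sgt[of t s] s i by auto
    have jS: "j \<in> Sgt t" using Sgt_mono[of t s] s j by auto
    have nb: "\<not> (i \<in> Bn g \<and> j \<in> Bn g)" using key1[of t s i j] s i j unfolding g_def by auto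
    have Xij: "X i j = 0 \<and> X j i = 0" using IH[rule_format, of s i j] s i j unfolding X_def by simp
    have c1: "(\<forall>k\<in>Sp g. E i k = 0 \<and> X i k = 0) \<or> (\<forall>k\<in>Sp g. E j k = 0 \<and> X k j = 0)"
      using nb Erow IH0 iS jS by blast
    have c2: "(\<forall>k\<in>Sp g. E j k = 0 \<and> X j k = 0) \<or> (\<forall>k\<in>Sp g. E i k = 0 \<and> X k i = 0)"
      using nb Erow IH0 iS jS by blast
    have "snd (es (Suc t)) i j = X i j" unfolding st[OF iM jM] using c1 by (intro formula_eq) blast
    moreover have "snd (es (Suc t)) j i = X j i" unfolding st[OF jM iM] using c2 by (intro formula_eq) blast
    ultimately show "snd (es (Suc t)) i j = 0 \<and> snd (es (Suc t)) j i = 0" using Xij by simp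
  qed
qed

lemma main:
  assumes Asym: "\<forall>i\<in>M. \<forall>j\<in>M. A i j \<noteq> 0 \<longleftrightarrow> A j i \<noteq> 0"
    and Sig_sparse: "\<forall>i\<in>M. \<forall>j\<in>M. i \<noteq> j \<and> A i j = 0 \<longrightarrow> Sig i j = 0"
  shows "\<forall>t < length ord.
     (let g = ord ! t;
          Sg = snd (elim_state M A Sig P Cl r ord t);
          Sgp = snd (elim_state M A Sig P Cl r ord (Suc t));
          Ag = fst (elim_state M A Sig P Cl r ord t);
          Bg = Bnd M A Cl g;
          Sp = priv M A P Cl r g;
          L = Lfac Ag Bg Sp
      in
        (\<forall>s. t \<le> s \<and> s < length ord \<longrightarrow>
           (\<forall>i\<in>priv M A P Cl r (ord ! s). \<forall>j\<in>S_gt M A P Cl r ord s - Bnd M A Cl (ord ! s).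
               Sg i j = 0 \<and> Sg j i = 0))
      \<and> (\<forall>i\<in>S_le M A P Cl r ord t. \<forall>j\<in>S_le M A P Cl r ord t. Sgp i j = Sg i j)
      \<and> (\<forall>i\<in>M. \<forall>j\<in>S_gt M A P Cl r ord t - Bg. Sgp i j = Sg i j \<and> Sgp j i = Sg j i)
      \<and> (\<forall>i\<in>Bg. \<forall>j\<in>Bg.
           Sgp i j = Sg i j - (\<Sum>k\<in>Sp. L i k * Sg k j) - (\<Sum>k\<in>Sp. Sg i k * cnj (L j k))
                     + (\<Sum>k\<in>Sp. \<Sum>l\<in>Sp. L i k * Sg k l * cnj (L j l))))"
  unfolding Let_def
proof (intro allI impI)
  fix t assume tn: "t < n"
  define g where "g = ord ! t"
  define X where "X = snd (es t)"
  define E where "E = Lfac (fst (es t)) (Bn g) (Sp g)"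
  have I: "\<forall>s. t \<le> s \<and> s < n \<longrightarrow>
     (\<forall>i\<in>Sp (ord ! s). \<forall>j\<in>Sgt s - Bn (ord ! s). snd (es t) i j = 0 \<and> snd (es t) j i = 0)"
    using I_holds[OF Asym Sig_sparse, of t] tn by simp
  have IH0: "\<forall>l\<in>Sp g. \<forall>x\<in>Sgt t - Bn g. X l x = 0 \<and> X x l = 0" using I tn unfolding g_def X_def by blast
  have Erow: "a \<notin> Bn g \<Longrightarrow> E a b = 0" for a b by (simp add: E_def Lfac_def)
  have st: "snd (es (Suc t)) a b = X a b - (\<Sum>k\<in>Sp g. E a k * X k b) - (\<Sum>k\<in>Sp g. X a k * cnj (E b k))
      + (\<Sum>k\<in>Sp g. \<Sum>l\<in>Sp g. E a k * X k l * cnj (E b l))" if "a \<in> M" "b \<in> M" for a b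
    unfolding X_def E_def g_def by (rule step[OF tn that])
  have IIa: "\<forall>i\<in>Sle t. \<forall>j\<in>Sle t. snd (es (Suc t)) i j = X i j"
  proof (intro ballI)
    fix i j assume i: "i \<in> Sle t" and j: "j \<in> Sle t"
    have iM: "i \<in> M" and jM: "j \<in> M" using Sle_M i j by auto
    have nB: "x \<notin> Bn g" if "x \<in> Sle t" for x
      using that key2[of _ t] tn unfolding Sle_mem g_def by blast
    show "snd (es (Suc t)) i j = X i j" unfolding st[OF iM jM]
      using nB[OF i] nB[OF j] Erow by (intro formula_eq) blast
  qed
  have IIbc: "\<forall>i\<in>M. \<forall>j\<in>Sgt t - Bn g. snd (es (Suc t)) i j = X i j \<and> snd (es (Suc t)) j i = X j i"
  proof (intro ballI)
    fix i j assume iM: "i \<in> M" and j: "j \<in> Sgt t - Bn g"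
    have jM: "j \<in> M" using Sgt_M j by blast
    have "snd (es (Suc t)) i j = X i j" unfolding st[OF iM jM]
      using j Erow IH0 by (intro formula_eq) blast
    moreover have "snd (es (Suc t)) j i = X j i" unfolding st[OF jM iM]
      using j Erow IH0 by (intro formula_eq) blast
    ultimately show "snd (es (Suc t)) i j = X i j \<and> snd (es (Suc t)) j i = X j i" by simp
  qed
  have III: "\<forall>i\<in>Bn g. \<forall>j\<in>Bn g. snd (es (Suc t)) i j = X i j - (\<Sum>k\<in>Sp g. E i k * X k j) - (\<Sum>k\<in>Sp g. X i k * cnj (E j k))
      + (\<Sum>k\<in>Sp g. \<Sum>l\<in>Sp g. E i k * X k l * cnj (E j l))"
    using st Bn_M[OF ord_N[OF tn]] unfolding g_def by blast
  show "(\<forall>s. t \<le> s \<and> s < n \<longrightarrow>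
           (\<forall>i\<in>Sp (ord ! s). \<forall>j\<in>Sgt s - Bn (ord ! s). snd (es t) i j = 0 \<and> snd (es t) j i = 0))
      \<and> (\<forall>i\<in>Sle t. \<forall>j\<in>Sle t. snd (es (Suc t)) i j = snd (es t) i j)
      \<and> (\<forall>i\<in>M. \<forall>j\<in>Sgt t - Bn (ord ! t). snd (es (Suc t)) i j = snd (es t) i j \<and> snd (es (Suc t)) j i = snd (es t) j i)
      \<and> (\<forall>i\<in>Bn (ord ! t). \<forall>j\<in>Bn (ord ! t).
           snd (es (Suc t)) i j = snd (es t) i j - (\<Sum>k\<in>Sp (ord ! t). Lfac (fst (es t)) (Bn (ord ! t)) (Sp (ord ! t)) i k * snd (es t) k j)
              - (\<Sum>k\<in>Sp (ord ! t). snd (es t) i k * cnj (Lfac (fst (es t)) (Bn (ord ! t)) (Sp (ord ! t)) j k))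
              + (\<Sum>k\<in>Sp (ord ! t). \<Sum>l\<in>Sp (ord ! t). Lfac (fst (es t)) (Bn (ord ! t)) (Sp (ord ! t)) i k * snd (es t) k l * cnj (Lfac (fst (es t)) (Bn (ord ! t)) (Sp (ord ! t)) j l)))"
    using I IIa IIbc III unfolding g_def X_def E_def by blast
qed

end

theorem theorem3:
  fixes M :: "'a set" and A Sig :: "'a cmat"
    and P :: "bool list set" and Cl :: "bool list \<Rightarrow> 'a set"
    and r :: "bool list" and ord :: "anode list"
  assumes finM: "finite M"
    and Ainv: "invertible_on M A"
    and Asym: "\<forall>i\<in>M. \<forall>j\<in>M. A i j \<noteq> 0 \<longleftrightarrow> A j i \<noteq> 0"
    and Sig_sparse: "\<forall>i\<in>M. \<forall>j\<in>M. i \<noteq> j \<and> A i j = 0 \<longrightarrow> Sig i j = 0"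
    and tree: "cluster_tree M P Cl"
    and leaf: "is_leaf P r"
    and ordering: "consistent_ordering P r ord"
    and piv: "\<forall>t < length ord. invertible_on (priv M A P Cl r (ord ! t))
                                  (fst (elim_state M A Sig P Cl r ord t))"
  shows "\<forall>t < length ord.
     (let g = ord ! t;
          Sg = snd (elim_state M A Sig P Cl r ord t);
          Sgp = snd (elim_state M A Sig P Cl r ord (Suc t));
          Ag = fst (elim_state M A Sig P Cl r ord t);
          Bg = Bnd M A Cl g;
          Sp = priv M A P Cl r g;
          L = Lfac Ag Bg Sp
      in
        \<comment> \<open>(I)\<close>
        (\<forall>s. t \<le> s \<and> s < length ord \<longrightarrow>
           (\<forall>i\<in>priv M A P Cl r (ord ! s). \<forall>j\<in>S_gt M A P Cl r ord s - Bnd M A Cl (ord ! s).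
               Sg i j = 0 \<and> Sg j i = 0))
        \<comment> \<open>(II a)\<close>
      \<and> (\<forall>i\<in>S_le M A P Cl r ord t. \<forall>j\<in>S_le M A P Cl r ord t. Sgp i j = Sg i j)
        \<comment> \<open>(II b), (II c)\<close>
      \<and> (\<forall>i\<in>M. \<forall>j\<in>S_gt M A P Cl r ord t - Bg. Sgp i j = Sg i j \<and> Sgp j i = Sg j i)
        \<comment> \<open>(III)\<close>
      \<and> (\<forall>i\<in>Bg. \<forall>j\<in>Bg.
           Sgp i j = Sg i j - (\<Sum>k\<in>Sp. L i k * Sg k j) - (\<Sum>k\<in>Sp. Sg i k * cnj (L j k))
                     + (\<Sum>k\<in>Sp. \<Sum>l\<in>Sp. L i k * Sg k l * cnj (L j l))))"
proof -
  interpret fnd M P Cl r A Sig ord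
    using tree leaf ordering finM by (simp add: fnd_def fnd_axioms_def ctree_def)
  show ?thesis by (rule main[OF Asym Sig_sparse])
qed


end
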